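(* Let $\mathcal C$ be a hereditary class of graphs with infinite VC-dimension. Then $\mathcal C$ contains all bipartite graphs, or $\mathcal C$ contains all co-bipartite graphs, or $\mathcal C$ contains all split graphs.
   Context: A class of graphs is hereditary if it is closed under isomorphism and under taking induced subgraphs. For a graph $G$ and $v\in V(G)$, $N[v]$ is the closed neighbourhood. A set $X\subseteq V(G)$ is shattered if for every $S\subseteq X$ there is a vertex $v$ with $N[v]\cap X=S$; the VC-dimension of $G$ is the largest size of a shattered set; a class has infinite VC-dimension if the VC-dimensions of its members are unbounded. A co-bipartite graph is the complement of a bipartite graph (its vertex set can be partitioned into two cliques). A split graph is a graph whose vertex set can be partitioned into a clique and a stable set. *)

theory Defs
  imports Main
begin

text \<open>Finite simple graphs with vertices drawn from nat: a pair (V, E) where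
  E is a symmetric irreflexive adjacency relation living on V.
  Every finite graph is isomorphic to such a graph.\<close>

type_synonym graph = "nat set \<times> (nat \<Rightarrow> nat \<Rightarrow> bool)"

definition verts :: "graph \<Rightarrow> nat set" where "verts G = fst G"
definition adj :: "graph \<Rightarrow> nat \<Rightarrow> nat \<Rightarrow> bool" where "adj G = snd G"

definition wf_graph :: "graph \<Rightarrow> bool" where
  "wf_graph G \<longleftrightarrow> finite (verts G)
     \<and> (\<forall>u v. adj G u v \<longrightarrow> u \<in> verts G \<and> v \<in> verts G)
     \<and> (\<forall>u v. adj G u v \<longrightarrow> adj G v u)
     \<and> (\<forall>u. \<not> adj G u u)"

definition graph_iso :: "graph \<Rightarrow> graph \<Rightarrow> bool" where
  "graph_iso G H \<longleftrightarrow> (\<exists>f. bij_betw f (verts G) (verts H)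
     \<and> (\<forall>u\<in>verts G. \<forall>v\<in>verts G. adj G u v \<longleftrightarrow> adj H (f u) (f v)))"

definition induced_subgraph :: "graph \<Rightarrow> nat set \<Rightarrow> graph" where
  "induced_subgraph G X = (verts G \<inter> X, (\<lambda>u v. adj G u v \<and> u \<in> X \<and> v \<in> X))"

definition hereditary :: "graph set \<Rightarrow> bool" where
  "hereditary C \<longleftrightarrow> (\<forall>G\<in>C. wf_graph G)
     \<and> (\<forall>G H. G \<in> C \<longrightarrow> wf_graph H \<longrightarrow> graph_iso G H \<longrightarrow> H \<in> C)
     \<and> (\<forall>G X. G \<in> C \<longrightarrow> X \<subseteq> verts G \<longrightarrow> induced_subgraph G X \<in> C)"

definition closed_nbhd :: "graph \<Rightarrow> nat \<Rightarrow> nat set" where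
  "closed_nbhd G v = insert v {u. adj G v u}"

definition shattered :: "graph \<Rightarrow> nat set \<Rightarrow> bool" where
  "shattered G X \<longleftrightarrow> X \<subseteq> verts G
     \<and> (\<forall>S\<subseteq>X. \<exists>v\<in>verts G. closed_nbhd G v \<inter> X = S)"

definition vc_dim :: "graph \<Rightarrow> nat" where
  "vc_dim G = Max (card ` {X. shattered G X})"

definition infinite_vc_dim :: "graph set \<Rightarrow> bool" where
  "infinite_vc_dim C \<longleftrightarrow> (\<forall>k. \<exists>G\<in>C. vc_dim G \<ge> k)"

definition stable :: "graph \<Rightarrow> nat set \<Rightarrow> bool" where
  "stable G A \<longleftrightarrow> (\<forall>u\<in>A. \<forall>v\<in>A. \<not> adj G u v)"

definition clique :: "graph \<Rightarrow> nat set \<Rightarrow> bool" where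
  "clique G A \<longleftrightarrow> (\<forall>u\<in>A. \<forall>v\<in>A. u \<noteq> v \<longrightarrow> adj G u v)"

definition bipartite :: "graph \<Rightarrow> bool" where
  "bipartite G \<longleftrightarrow> (\<exists>A B. A \<union> B = verts G \<and> A \<inter> B = {} \<and> stable G A \<and> stable G B)"

definition co_bipartite :: "graph \<Rightarrow> bool" where
  "co_bipartite G \<longleftrightarrow> (\<exists>A B. A \<union> B = verts G \<and> A \<inter> B = {} \<and> clique G A \<and> clique G B)"

definition split_graph :: "graph \<Rightarrow> bool" where
  "split_graph G \<longleftrightarrow> (\<exists>A B. A \<union> B = verts G \<and> A \<inter> B = {} \<and> clique G A \<and> stable G B)"

end

theory Submission imports Defs "HOL-Library.Ramsey" begin

lemma ramsey_hom:
  "\<exists>r. \<forall>(V::'a set) (P::'a \<Rightarrow> 'a \<Rightarrow> bool). finite V \<and> card V \<ge> r \<and> (\<forall>x y. P x y \<longrightarrow> P y x) \<longrightarrow>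
    (\<exists>R \<subseteq> V. card R = m \<and> (\<exists>p. \<forall>x\<in>R. \<forall>y\<in>R. x \<noteq> y \<longrightarrow> (P x y \<longleftrightarrow> p)))"
proof -
  obtain r where r: "\<forall>(V::'a set) (E::'a set set). finite V \<and> card V \<ge> r \<longrightarrow>
    (\<exists>R \<subseteq> V. card R = m \<and> Ramsey.clique R E \<or> card R = m \<and> indep R E)"
    using ramsey2[of m m] by blast
  show ?thesis
  proof (intro exI[of _ r] allI impI)
    fix V :: "'a set" and P :: "'a \<Rightarrow> 'a \<Rightarrow> bool"
    assume a: "finite V \<and> card V \<ge> r \<and> (\<forall>x y. P x y \<longrightarrow> P y x)"
    define E where "E = {{x,y} | x y. P x y}"
    have EP: "{x,y} \<in> E \<longleftrightarrow> P x y" if "x \<noteq> y" for x y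
    proof
      assume "{x,y} \<in> E"
      then obtain x' y' where "{x,y} = {x',y'}" "P x' y'" unfolding E_def by blast
      then show "P x y" using a by (metis doubleton_eq_iff)
    next
      assume "P x y" then show "{x,y} \<in> E" unfolding E_def by blast
    qed
    obtain R where R: "R \<subseteq> V" "card R = m \<and> Ramsey.clique R E \<or> card R = m \<and> indep R E"
      using r a by blast
    show "\<exists>R \<subseteq> V. card R = m \<and> (\<exists>p. \<forall>x\<in>R. \<forall>y\<in>R. x \<noteq> y \<longrightarrow> (P x y \<longleftrightarrow> p))"
    proof -
      have "\<forall>x\<in>R. \<forall>y\<in>R. x \<noteq> y \<longrightarrow> (P x y \<longleftrightarrow> Ramsey.clique R E)"
        using R(2) EP unfolding Ramsey.clique_def indep_def by blast
      moreover have "card R = m" using R(2) by blast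
      ultimately show ?thesis using R(1) by blast
    qed
  qed
qed

lemma embed:
  assumes C: "hereditary C" and G: "G \<in> C" and H: "wf_graph H"
    and inj: "inj_on h (verts H)" and sub: "h ` verts H \<subseteq> verts G"
    and ad: "\<forall>u\<in>verts H. \<forall>v\<in>verts H. adj H u v \<longleftrightarrow> adj G (h u) (h v)"
  shows "H \<in> C"
proof -
  define S where "S = h ` verts H"
  define G' where "G' = induced_subgraph G S"
  have G'C: "G' \<in> C" using C G sub unfolding hereditary_def G'_def S_def by blast
  have vG': "verts G' = S" using sub unfolding G'_def induced_subgraph_def verts_def S_def by auto
  have aG': "adj G' x y \<longleftrightarrow> adj G x y \<and> x \<in> S \<and> y \<in> S" for x y
    unfolding G'_def induced_subgraph_def adj_def by simp
  have bij: "bij_betw h (verts H) S" using inj unfolding S_def bij_betw_def by simp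
  have bij2: "bij_betw (inv_into (verts H) h) S (verts H)" using bij_betw_inv_into[OF bij] .
  have "graph_iso G' H"
    unfolding graph_iso_def
  proof (intro exI conjI ballI)
    show "bij_betw (inv_into (verts H) h) (verts G') (verts H)" using bij2 vG' by simp
  next
    fix u v assume u: "u \<in> verts G'" and v: "v \<in> verts G'"
    then have uS: "u \<in> S" "v \<in> S" using vG' by auto
    have iu: "inv_into (verts H) h u \<in> verts H" "h (inv_into (verts H) h u) = u"
      using uS(1) unfolding S_def by (auto intro: inv_into_into f_inv_into_f)
    have iv: "inv_into (verts H) h v \<in> verts H" "h (inv_into (verts H) h v) = v"
      using uS(2) unfolding S_def by (auto intro: inv_into_into f_inv_into_f)
    show "adj G' u v = adj H (inv_into (verts H) h u) (inv_into (verts H) h v)"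
      using ad iu iv uS aG' by metis
  qed
  then show ?thesis using C G'C H unfolding hereditary_def by blast
qed

definition realizes :: "graph set \<Rightarrow> bool \<Rightarrow> bool \<Rightarrow> nat set \<Rightarrow> nat set \<Rightarrow> (nat \<Rightarrow> nat \<Rightarrow> bool) \<Rightarrow> bool" where
  "realizes C p q A B E \<longleftrightarrow> (\<exists>G\<in>C. \<exists>f g. inj_on f A \<and> inj_on g B \<and> f ` A \<subseteq> verts G \<and> g ` B \<subseteq> verts G
     \<and> f ` A \<inter> g ` B = {}
     \<and> (\<forall>a\<in>A. \<forall>a'\<in>A. a \<noteq> a' \<longrightarrow> (adj G (f a) (f a') \<longleftrightarrow> p))
     \<and> (\<forall>b\<in>B. \<forall>b'\<in>B. b \<noteq> b' \<longrightarrow> (adj G (g b) (g b') \<longleftrightarrow> q))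
     \<and> (\<forall>a\<in>A. \<forall>b\<in>B. adj G (f a) (g b) \<longleftrightarrow> E a b))"

lemma realizes_graph:
  assumes C: "hereditary C" and H: "wf_graph H"
    and part: "A \<union> B = verts H" "A \<inter> B = {}"
    and hA: "\<forall>u\<in>A. \<forall>v\<in>A. u \<noteq> v \<longrightarrow> (adj H u v \<longleftrightarrow> p)"
    and hB: "\<forall>u\<in>B. \<forall>v\<in>B. u \<noteq> v \<longrightarrow> (adj H u v \<longleftrightarrow> q)"
    and R: "realizes C p q A B (adj H)"
  shows "H \<in> C"
proof -
  obtain G f g where G: "G \<in> C" and fg: "inj_on f A" "inj_on g B" "f ` A \<subseteq> verts G" "g ` B \<subseteq> verts G"
     "f ` A \<inter> g ` B = {}"
     "\<forall>a\<in>A. \<forall>a'\<in>A. a \<noteq> a' \<longrightarrow> (adj G (f a) (f a') \<longleftrightarrow> p)"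
     "\<forall>b\<in>B. \<forall>b'\<in>B. b \<noteq> b' \<longrightarrow> (adj G (g b) (g b') \<longleftrightarrow> q)"
     "\<forall>a\<in>A. \<forall>b\<in>B. adj G (f a) (g b) \<longleftrightarrow> adj H a b"
    using R unfolding realizes_def
    apply (elim bexE exE conjE)
    apply (rule that)
    by assumption+
  have wG: "wf_graph G" using C G unfolding hereditary_def by blast
  define h where "h v = (if v \<in> A then f v else g v)" for v
  show ?thesis
  proof (rule embed[OF C G H])
    show "inj_on h (verts H)"
    proof (rule inj_onI)
      fix x y assume x: "x \<in> verts H" and y: "y \<in> verts H" and e: "h x = h y"
      have xAB: "x \<in> A \<or> x \<in> B" and yAB: "y \<in> A \<or> y \<in> B" using x y part by auto
      show "x = y"
      proof (cases "x \<in> A")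
        case True
        then show ?thesis using yAB e fg(1,5) unfolding h_def inj_on_def by (cases "y \<in> A") auto
      next
        case False
        then show ?thesis using xAB yAB e fg(2,5) unfolding h_def inj_on_def by (cases "y \<in> A") auto
      qed
    qed
    show "h ` verts H \<subseteq> verts G" using fg(3,4) part unfolding h_def image_subset_iff by (metis Un_iff)
    show "\<forall>u\<in>verts H. \<forall>v\<in>verts H. adj H u v = adj G (h u) (h v)"
    proof (intro ballI)
      fix u v assume u: "u \<in> verts H" and v: "v \<in> verts H"
      show "adj H u v = adj G (h u) (h v)"
      proof (cases "u = v")
        case True then show ?thesis using H wG unfolding wf_graph_def by simp
      next
        case False
        have symH: "adj H x y = adj H y x" for x y using H unfolding wf_graph_def by blast
        have symG: "adj G x y = adj G y x" for x y using wG unfolding wf_graph_def by blast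
        have uAB: "u \<in> A \<or> u \<in> B" and vAB: "v \<in> A \<or> v \<in> B" using u v part by auto
        show ?thesis
        proof (cases "u \<in> A")
          case uA: True
          show ?thesis
          proof (cases "v \<in> A")
            case True then show ?thesis using uA False fg(6) hA unfolding h_def by simp
          next
            case vn: False
            then have "v \<in> B" using vAB by simp
            then show ?thesis using uA vn fg(8) unfolding h_def by simp
          qed
        next
          case un: False
          then have uB: "u \<in> B" using uAB by simp
          show ?thesis
          proof (cases "v \<in> A")
            case True
            then have "adj G (f v) (g u) = adj H v u" using uB fg(8) by blast
            then show ?thesis using True un symG[of "f v" "g u"] symH[of v u] unfolding h_def by simp
          next
            case vn: False
            then have "v \<in> B" using vAB by simp
            then show ?thesis using uB un vn False fg(7) hB unfolding h_def by simp
          qed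
        qed
      qed
    qed
  qed
qed


lemma large_shattered:
  assumes C: "hereditary C" and V: "infinite_vc_dim C"
  shows "\<exists>G\<in>C. \<exists>X. shattered G X \<and> card X \<ge> r"
proof -
  define c where "c = Max ({}::nat set)"
  obtain G where G: "G \<in> C" and vG: "vc_dim G \<ge> max r (Suc c)"
    using V unfolding infinite_vc_dim_def by blast
  have wG: "wf_graph G" using C G unfolding hereditary_def by blast
  define S where "S = {X. shattered G X}"
  have "S \<noteq> {}"
  proof
    assume "S = {}"
    then have "vc_dim G = c" unfolding vc_dim_def c_def S_def[symmetric] by simp
    then show False using vG by simp
  qed
  moreover have "finite S"
  proof (rule finite_subset)
    show "S \<subseteq> Pow (verts G)" unfolding S_def shattered_def by auto
    show "finite (Pow (verts G))" using wG unfolding wf_graph_def by simp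
  qed
  ultimately have "Max (card ` S) \<in> card ` S" by (intro Max_in) auto
  then obtain X where "X \<in> S" "card X = vc_dim G" unfolding vc_dim_def S_def by auto
  then have "shattered G X" "card X \<ge> r" using vG unfolding S_def by auto
  then show ?thesis using G by blast
qed

lemma core:
  assumes C: "hereditary C" and V: "infinite_vc_dim C" and fA: "finite A" and fB: "finite B"
  shows "\<exists>p q. realizes C p q A B E"
proof -
  define s where "s = card B"
  obtain M where M: "\<forall>(V::nat set) P. finite V \<and> card V \<ge> M \<and> (\<forall>x y. P x y \<longrightarrow> P y x) \<longrightarrow>
    (\<exists>R \<subseteq> V. card R = s \<and> (\<exists>p. \<forall>x\<in>R. \<forall>y\<in>R. x \<noteq> y \<longrightarrow> (P x y \<longleftrightarrow> p)))"
    using ramsey_hom by blast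
  define N0 where "N0 = card A + 2"
  define I where "I = Pow {..<M} \<times> {..<N0}"
  have fI: "finite I" unfolding I_def by simp
  obtain rZ where rZ: "\<forall>(V::nat set) P. finite V \<and> card V \<ge> rZ \<and> (\<forall>x y. P x y \<longrightarrow> P y x) \<longrightarrow>
    (\<exists>R \<subseteq> V. card R = card I \<and> (\<exists>p. \<forall>x\<in>R. \<forall>y\<in>R. x \<noteq> y \<longrightarrow> (P x y \<longleftrightarrow> p)))"
    using ramsey_hom by blast
  obtain G X where G: "G \<in> C" and sh: "shattered G X" and cX: "card X \<ge> rZ"
    using large_shattered[OF C V] by blast
  have wG: "wf_graph G" using C G unfolding hereditary_def by blast
  have XG: "X \<subseteq> verts G" using sh unfolding shattered_def by blast
  have fX: "finite X" using XG wG unfolding wf_graph_def by (auto intro: finite_subset)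
  have symG: "\<forall>x y. adj G x y \<longrightarrow> adj G y x" using wG unfolding wf_graph_def by blast
  obtain Z p where Z: "Z \<subseteq> X" "card Z = card I" "\<forall>x\<in>Z. \<forall>y\<in>Z. x \<noteq> y \<longrightarrow> (adj G x y \<longleftrightarrow> p)"
    using rZ[rule_format, of X "adj G"] fX cX symG by blast
  have fZ: "finite Z" using Z(1) fX by (rule finite_subset)
  obtain \<phi> where phi: "bij_betw \<phi> I Z" using finite_same_card_bij[OF fI fZ] Z(2) by metis
  have phiinj: "inj_on \<phi> I" and phiI: "\<phi> ` I = Z" using phi unfolding bij_betw_def by auto
  define F where "F k = \<phi> ` {x\<in>I. k \<in> fst x}" for k
  have FZ: "F k \<subseteq> Z" for k unfolding F_def using phiI by auto
  have "\<forall>k. \<exists>v\<in>verts G. closed_nbhd G v \<inter> X = F k"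
    using sh FZ Z(1) unfolding shattered_def by blast
  then obtain w where w: "\<And>k. w k \<in> verts G" "\<And>k. closed_nbhd G (w k) \<inter> X = F k" by metis
  have inF: "\<phi> x \<in> F k \<longleftrightarrow> k \<in> fst x" if "x \<in> I" for x k
  proof
    assume "\<phi> x \<in> F k"
    then obtain y where "y \<in> I" "k \<in> fst y" "\<phi> x = \<phi> y" unfolding F_def by auto
    then show "k \<in> fst x" using phiinj that unfolding inj_on_def by metis
  qed (use that in \<open>auto simp: F_def\<close>)
  have N0: "0 < N0" "1 < N0" unfolding N0_def by auto
  have wZ: "w k \<notin> Z" if k: "k < M" for k
  proof
    assume wk: "w k \<in> Z"
    show False
    proof (cases p)
      case True
      have I0: "({}, 0) \<in> I" using N0 unfolding I_def by auto
      have pZ: "\<phi> ({}, 0) \<in> Z" using I0 phiI by blast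
      have "\<phi> ({}, 0) \<in> closed_nbhd G (w k)"
      proof (cases "\<phi> ({}, 0) = w k")
        case False
        then have "adj G (w k) (\<phi> ({}, 0))" using True Z(3)[rule_format, OF wk pZ] by simp
        then show ?thesis unfolding closed_nbhd_def by simp
      qed (simp add: closed_nbhd_def)
      then have "\<phi> ({}, 0) \<in> closed_nbhd G (w k) \<inter> X" using pZ Z(1) by blast
      then have "\<phi> ({}, 0) \<in> F k" using w(2)[of k] by simp
      then show False using inF[OF I0] by simp
    next
      case False
      have I0: "({k}, 0) \<in> I" "({k}, 1) \<in> I" using N0 k unfolding I_def by auto
      have a0: "\<phi> ({k}, 0) \<in> F k" "\<phi> ({k}, 1) \<in> F k"
        using inF[OF I0(1), of k] inF[OF I0(2), of k] by simp_all
      have b0: "\<phi> ({k}, 0) \<in> closed_nbhd G (w k)" "\<phi> ({k}, 1) \<in> closed_nbhd G (w k)"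
        using a0 w(2)[of k] by blast+
      have c0: "\<phi> ({k}, 0) \<in> Z" "\<phi> ({k}, 1) \<in> Z" using a0 FZ[of k] by blast+
      have d: "x = w k" if "x \<in> closed_nbhd G (w k)" "x \<in> Z" for x
      proof (rule ccontr)
        assume "x \<noteq> w k"
        then have "adj G (w k) x" using that(1) unfolding closed_nbhd_def by simp
        moreover have "\<not> adj G (w k) x" using False Z(3)[rule_format, OF wk that(2)] \<open>x \<noteq> w k\<close> by simp
        ultimately show False by simp
      qed
      have "\<phi> ({k}, 0) = \<phi> ({k}, 1)" using d[OF b0(1) c0(1)] d[OF b0(2) c0(2)] by simp
      then show False using inj_onD[OF phiinj _ I0(1) I0(2)] by simp
    qed
  qed
  have winj: "inj_on w {..<M}"
  proof (rule inj_onI)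
    fix k k' assume k: "k \<in> {..<M}" and k': "k' \<in> {..<M}" and e: "w k = w k'"
    have I0: "({k}, 0) \<in> I" using N0 k unfolding I_def by auto
    have "F k = F k'" using w(2)[of k] w(2)[of k'] e by simp
    then have "\<phi> ({k}, 0) \<in> F k'" using inF[OF I0, of k] by simp
    then show "k = k'" using inF[OF I0, of k'] by simp
  qed
  have symW: "\<forall>x y. adj G (w x) (w y) \<longrightarrow> adj G (w y) (w x)" using symG by blast
  have "card {..<M} \<ge> M" by simp
  then obtain K q where K: "K \<subseteq> {..<M}" "card K = s" "\<forall>x\<in>K. \<forall>y\<in>K. x \<noteq> y \<longrightarrow> (adj G (w x) (w y) \<longleftrightarrow> q)"
    using M[rule_format, of "{..<M}" "\<lambda>x y. adj G (w x) (w y)", OF conjI[OF finite_lessThan conjI[OF \<open>card {..<M} \<ge> M\<close> symW]]] by blast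
  have fK: "finite K" using K(1) finite_subset by blast
  obtain \<sigma> where sig: "bij_betw \<sigma> B K" using finite_same_card_bij[OF fB fK] K(2) s_def by metis
  have siginj: "inj_on \<sigma> B" and sigK: "\<sigma> ` B = K" using sig unfolding bij_betw_def by auto
  obtain \<iota> where iota: "bij_betw \<iota> A {0..<card A}" using ex_bij_betw_finite_nat[OF fA] by blast
  have iotainj: "inj_on \<iota> A" and iotaA: "\<And>a. a \<in> A \<Longrightarrow> \<iota> a < card A"
    using iota unfolding bij_betw_def by auto
  define f where "f a = \<phi> (\<sigma> ` {b\<in>B. E a b}, \<iota> a)" for a
  define g where "g b = w (\<sigma> b)" for b
  have keyI: "(\<sigma> ` {b\<in>B. E a b}, \<iota> a) \<in> I" if "a \<in> A" for a
    using iotaA[OF that] sigK K(1) unfolding I_def N0_def by auto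
  have fZ': "f a \<in> Z" if "a \<in> A" for a unfolding f_def using keyI[OF that] phiI by auto
  have gM: "\<sigma> b < M" if "b \<in> B" for b using sigK K(1) that by auto
  have finj: "inj_on f A"
  proof (rule inj_onI)
    fix a a' assume a: "a \<in> A" and a': "a' \<in> A" and e: "f a = f a'"
    then have "(\<sigma> ` {b\<in>B. E a b}, \<iota> a) = (\<sigma> ` {b\<in>B. E a' b}, \<iota> a')"
      using inj_onD[OF phiinj e[unfolded f_def] keyI[OF a] keyI[OF a']] by blast
    then show "a = a'" using iotainj a a' unfolding inj_on_def by simp
  qed
  have ginj: "inj_on g B"
  proof (rule inj_onI)
    fix b b' assume b: "b \<in> B" and b': "b' \<in> B" and e: "g b = g b'"
    then have "\<sigma> b = \<sigma> b'" using inj_onD[OF winj e[unfolded g_def]] gM[OF b] gM[OF b'] by simp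
    then show "b = b'" using inj_onD[OF siginj _ b b'] by blast
  qed
  have cross: "adj G (f a) (g b) \<longleftrightarrow> E a b" if a: "a \<in> A" and b: "b \<in> B" for a b
  proof -
    have ne: "f a \<noteq> g b" using fZ'[OF a] wZ[OF gM[OF b]] unfolding g_def by auto
    have "adj G (f a) (g b) \<longleftrightarrow> f a \<in> closed_nbhd G (g b)"
      using ne symG unfolding closed_nbhd_def by auto
    also have "\<dots> \<longleftrightarrow> f a \<in> F (\<sigma> b)" using w(2)[of "\<sigma> b"] fZ'[OF a] Z(1) unfolding g_def by auto
    also have "\<dots> \<longleftrightarrow> \<sigma> b \<in> \<sigma> ` {b\<in>B. E a b}" unfolding f_def using inF[OF keyI[OF a]] by simp
    also have "\<dots> \<longleftrightarrow> E a b" using siginj b unfolding inj_on_def by auto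
    finally show ?thesis .
  qed
  have "realizes C p q A B E"
    unfolding realizes_def
    apply (rule bexI[OF _ G])
    apply (rule exI[of _ f])
    apply (rule exI[of _ g])
  proof (intro conjI ballI impI)
    show "inj_on f A" by (rule finj)
    show "inj_on g B" by (rule ginj)
    show "f ` A \<subseteq> verts G" using fZ' Z(1) XG by auto
    show "g ` B \<subseteq> verts G" using w(1) unfolding g_def by auto
    show "f ` A \<inter> g ` B = {}" using fZ' wZ gM unfolding g_def by (auto, metis)
    fix a a' assume a: "a \<in> A" "a' \<in> A" "a \<noteq> a'"
    then have "f a \<noteq> f a'" using inj_onD[OF finj _ a(1) a(2)] by blast
    then show "adj G (f a) (f a') = p" using Z(3)[rule_format, OF fZ'[OF a(1)] fZ'[OF a(2)]] by simp
  next
    fix b b' assume b: "b \<in> B" "b' \<in> B" "b \<noteq> b'"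
    then have "\<sigma> b \<noteq> \<sigma> b'" using inj_onD[OF siginj _ b(1) b(2)] by blast
    moreover have "\<sigma> b \<in> K" "\<sigma> b' \<in> K" using sigK b by auto
    ultimately show "adj G (g b) (g b') = q" using K(3)[rule_format, of "\<sigma> b" "\<sigma> b'"] unfolding g_def by simp
  next
    fix a b assume "a \<in> A" "b \<in> B"
    then show "adj G (f a) (g b) = E a b" by (rule cross)
  qed
  then show ?thesis by blast
qed


lemma realizes_restrict:
  assumes R: "realizes C p q A' B' E'" and h1: "inj_on h1 A" "h1 ` A \<subseteq> A'"
    and h2: "inj_on h2 B" "h2 ` B \<subseteq> B'" and E: "\<forall>a\<in>A. \<forall>b\<in>B. E' (h1 a) (h2 b) \<longleftrightarrow> E a b"
  shows "realizes C p q A B E"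
proof -
  obtain G f g where G: "G \<in> C" and fg: "inj_on f A'" "inj_on g B'" "f ` A' \<subseteq> verts G" "g ` B' \<subseteq> verts G"
     "f ` A' \<inter> g ` B' = {}"
     "\<forall>a\<in>A'. \<forall>a'\<in>A'. a \<noteq> a' \<longrightarrow> (adj G (f a) (f a') \<longleftrightarrow> p)"
     "\<forall>b\<in>B'. \<forall>b'\<in>B'. b \<noteq> b' \<longrightarrow> (adj G (g b) (g b') \<longleftrightarrow> q)"
     "\<forall>a\<in>A'. \<forall>b\<in>B'. adj G (f a) (g b) \<longleftrightarrow> E' a b"
    using R unfolding realizes_def
    apply (elim bexE exE conjE)
    apply (rule that)
    by assumption+
  show ?thesis
    unfolding realizes_def
    apply (rule bexI[OF _ G])
    apply (rule exI[of _ "f \<circ> h1"])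
    apply (rule exI[of _ "g \<circ> h2"])
  proof (intro conjI ballI impI)
    show "inj_on (f \<circ> h1) A" using comp_inj_on[OF h1(1)] fg(1) h1(2) inj_on_subset by blast
    show "inj_on (g \<circ> h2) B" using comp_inj_on[OF h2(1)] fg(2) h2(2) inj_on_subset by blast
    show "(f \<circ> h1) ` A \<subseteq> verts G" using fg(3) h1(2) by auto
    show "(g \<circ> h2) ` B \<subseteq> verts G" using fg(4) h2(2) by auto
    show "(f \<circ> h1) ` A \<inter> (g \<circ> h2) ` B = {}"
    proof -
      have "(f \<circ> h1) ` A \<subseteq> f ` A'" "(g \<circ> h2) ` B \<subseteq> g ` B'" using h1(2) h2(2) by auto
      then show ?thesis using fg(5) by blast
    qed
  next
    fix a a' assume a: "a \<in> A" "a' \<in> A" "a \<noteq> a'"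
    then have "h1 a \<noteq> h1 a'" using inj_onD[OF h1(1) _ a(1) a(2)] by blast
    moreover have "h1 a \<in> A'" "h1 a' \<in> A'" using a h1(2) by auto
    ultimately show "adj G ((f \<circ> h1) a) ((f \<circ> h1) a') = p" using fg(6)[rule_format, of "h1 a" "h1 a'"] by simp
  next
    fix b b' assume b: "b \<in> B" "b' \<in> B" "b \<noteq> b'"
    then have "h2 b \<noteq> h2 b'" using inj_onD[OF h2(1) _ b(1) b(2)] by blast
    moreover have "h2 b \<in> B'" "h2 b' \<in> B'" using b h2(2) by auto
    ultimately show "adj G ((g \<circ> h2) b) ((g \<circ> h2) b') = q" using fg(7)[rule_format, of "h2 b" "h2 b'"] by simp
  next
    fix a b assume ab: "a \<in> A" "b \<in> B"
    moreover have "h1 a \<in> A'" "h2 b \<in> B'" using ab h1(2) h2(2) by auto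
    ultimately show "adj G ((f \<circ> h1) a) ((g \<circ> h2) b) = E a b"
      using fg(8)[rule_format, of "h1 a" "h2 b"] E[rule_format, of a b] by simp
  qed
qed

definition code :: "bool \<Rightarrow> bool \<Rightarrow> nat" where
  "code p q = (if p then 2 else 0) + (if q then 1 else 0)"
definition enc :: "bool \<Rightarrow> bool \<Rightarrow> nat \<Rightarrow> nat" where
  "enc p q a = 4 * a + code p q"

lemma enc_inj: "enc p q a = enc p' q' a' \<Longrightarrow> p = p' \<and> q = q' \<and> a = a'"
  unfolding enc_def code_def
  by (cases p; cases q; cases p'; cases q'; simp; arith)


lemma uniform_type:
  assumes C: "hereditary C" and V: "infinite_vc_dim C"
  shows "\<exists>p q. \<forall>A B E. finite A \<longrightarrow> finite B \<longrightarrow> realizes C p q A B E"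
proof (rule ccontr)
  assume nt: "\<not> (\<exists>p q. \<forall>A B E. finite A \<longrightarrow> finite B \<longrightarrow> realizes C p q A B E)"
  have ex: "\<exists>A B E. finite A \<and> finite B \<and> \<not> realizes C p q A B E" for p q
  proof (rule ccontr)
    assume "\<not> (\<exists>A B E. finite A \<and> finite B \<and> \<not> realizes C p q A B E)"
    then have "\<forall>A B E. finite A \<longrightarrow> finite B \<longrightarrow> realizes C p q A B E" by blast
    then show False using nt by blast
  qed
  define Q where "Q p q T \<longleftrightarrow> finite (fst T) \<and> finite (fst (snd T)) \<and> \<not> realizes C p q (fst T) (fst (snd T)) (snd (snd T))" for p q T
  define T where "T p q = (SOME T. Q p q T)" for p q
  define PA where "PA p q = fst (T p q)" for p q
  define PB where "PB p q = fst (snd (T p q))" for p q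
  define PE where "PE p q = snd (snd (T p q))" for p q
  have P: "finite (PA p q) \<and> finite (PB p q) \<and> \<not> realizes C p q (PA p q) (PB p q) (PE p q)" for p q
  proof -
    obtain A B E where abe: "finite A \<and> finite B \<and> \<not> realizes C p q A B E" using ex[of p q] by (elim exE)
    have "Q p q (A, B, E)" unfolding Q_def fst_conv snd_conv by (rule abe)
    then have "Q p q (T p q)" unfolding T_def by (rule someI[of "Q p q"])
    then show ?thesis unfolding PA_def PB_def PE_def Q_def .
  qed
  define A' where "A' = (\<Union>p\<in>UNIV. \<Union>q\<in>UNIV. enc p q ` PA p q)"
  define B' where "B' = (\<Union>p\<in>UNIV. \<Union>q\<in>UNIV. enc p q ` PB p q)"
  define E' where "E' x y = (\<exists>p q a b. x = enc p q a \<and> y = enc p q b \<and> PE p q a b)" for x y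
  have UB: "(UNIV :: bool set) = {True, False}" by auto
  have "finite A'" unfolding A'_def UB using P by simp
  moreover have "finite B'" unfolding B'_def UB using P by simp
  ultimately obtain p q where R: "realizes C p q A' B' E'" using core[OF C V, of A' B' E'] by blast
  have "realizes C p q (PA p q) (PB p q) (PE p q)"
  proof (rule realizes_restrict[OF R])
    show "inj_on (enc p q) (PA p q)" "inj_on (enc p q) (PB p q)"
      by (meson enc_inj inj_onI)+
    show "enc p q ` PA p q \<subseteq> A'" unfolding A'_def by blast
    show "enc p q ` PB p q \<subseteq> B'" unfolding B'_def by blast
    show "\<forall>a\<in>PA p q. \<forall>b\<in>PB p q. E' (enc p q a) (enc p q b) = PE p q a b"
    proof (intro ballI iffI)
      fix a b assume "E' (enc p q a) (enc p q b)"
      then obtain p' q' a' b' where e: "enc p q a = enc p' q' a'" "enc p q b = enc p' q' b'" "PE p' q' a' b'"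
        unfolding E'_def by blast
      then show "PE p q a b" using enc_inj[OF e(1)] enc_inj[OF e(2)] by simp
    next
      fix a b assume "PE p q a b"
      then show "E' (enc p q a) (enc p q b)" unfolding E'_def by blast
    qed
  qed
  then show False using P by blast
qed


lemma finite_parts: "wf_graph H \<Longrightarrow> A \<union> B = verts H \<Longrightarrow> finite A \<and> finite B"
  unfolding wf_graph_def by (metis finite_Un)

theorem mainTheorem4:
  assumes "hereditary C" and "infinite_vc_dim C"
  shows "(\<forall>G. wf_graph G \<and> bipartite G \<longrightarrow> G \<in> C)
       \<or> (\<forall>G. wf_graph G \<and> co_bipartite G \<longrightarrow> G \<in> C)
       \<or> (\<forall>G. wf_graph G \<and> split_graph G \<longrightarrow> G \<in> C)"
proof -
  obtain p q where U: "\<And>A B E. finite A \<Longrightarrow> finite B \<Longrightarrow> realizes C p q A B E"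
    using uniform_type[OF assms] by blast
  show ?thesis
  proof (cases p; cases q)
    assume pq: "\<not> p" "\<not> q"
    have "\<forall>G. wf_graph G \<and> bipartite G \<longrightarrow> G \<in> C"
    proof (intro allI impI)
      fix H assume H: "wf_graph H \<and> bipartite H"
      then obtain A B where AB: "A \<union> B = verts H" "A \<inter> B = {}" "stable H A" "stable H B"
        unfolding bipartite_def by blast
      have fin: "finite A" "finite B" using finite_parts[OF _ AB(1)] H by auto
      show "H \<in> C"
      proof (rule realizes_graph[OF assms(1) _ AB(1,2)])
        show "wf_graph H" using H by simp
        show "\<forall>u\<in>A. \<forall>v\<in>A. u \<noteq> v \<longrightarrow> adj H u v = p" using AB(3) pq unfolding stable_def by simp
        show "\<forall>u\<in>B. \<forall>v\<in>B. u \<noteq> v \<longrightarrow> adj H u v = q" using AB(4) pq unfolding stable_def by simp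
        show "realizes C p q A B (adj H)" using U fin by simp
      qed
    qed
    then show ?thesis by simp
  next
    assume pq: "p" "q"
    have "\<forall>G. wf_graph G \<and> co_bipartite G \<longrightarrow> G \<in> C"
    proof (intro allI impI)
      fix H assume H: "wf_graph H \<and> co_bipartite H"
      then obtain A B where AB: "A \<union> B = verts H" "A \<inter> B = {}" "Defs.clique H A" "Defs.clique H B"
        unfolding co_bipartite_def by blast
      have fin: "finite A" "finite B" using finite_parts[OF _ AB(1)] H by auto
      show "H \<in> C"
      proof (rule realizes_graph[OF assms(1) _ AB(1,2)])
        show "wf_graph H" using H by simp
        show "\<forall>u\<in>A. \<forall>v\<in>A. u \<noteq> v \<longrightarrow> adj H u v = p" using AB(3) pq unfolding Defs.clique_def by simp
        show "\<forall>u\<in>B. \<forall>v\<in>B. u \<noteq> v \<longrightarrow> adj H u v = q" using AB(4) pq unfolding Defs.clique_def by simp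
        show "realizes C p q A B (adj H)" using U fin by simp
      qed
    qed
    then show ?thesis by simp
  next
    assume pq: "p" "\<not> q"
    have "\<forall>G. wf_graph G \<and> split_graph G \<longrightarrow> G \<in> C"
    proof (intro allI impI)
      fix H assume H: "wf_graph H \<and> split_graph H"
      then obtain A B where AB: "A \<union> B = verts H" "A \<inter> B = {}" "Defs.clique H A" "stable H B"
        unfolding split_graph_def by blast
      have fin: "finite A" "finite B" using finite_parts[OF _ AB(1)] H by auto
      show "H \<in> C"
      proof (rule realizes_graph[OF assms(1) _ AB(1,2)])
        show "wf_graph H" using H by simp
        show "\<forall>u\<in>A. \<forall>v\<in>A. u \<noteq> v \<longrightarrow> adj H u v = p" using AB(3) pq unfolding Defs.clique_def by simp
        show "\<forall>u\<in>B. \<forall>v\<in>B. u \<noteq> v \<longrightarrow> adj H u v = q" using AB(4) pq unfolding stable_def by simp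
        show "realizes C p q A B (adj H)" using U fin by simp
      qed
    qed
    then show ?thesis by simp
  next
    assume pq: "\<not> p" "q"
    have "\<forall>G. wf_graph G \<and> split_graph G \<longrightarrow> G \<in> C"
    proof (intro allI impI)
      fix H assume H: "wf_graph H \<and> split_graph H"
      then obtain A B where AB: "A \<union> B = verts H" "A \<inter> B = {}" "Defs.clique H A" "stable H B"
        unfolding split_graph_def by blast
      have AB': "B \<union> A = verts H" "B \<inter> A = {}" using AB(1,2) by auto
      have fin: "finite A" "finite B" using finite_parts[OF _ AB(1)] H by auto
      show "H \<in> C"
      proof (rule realizes_graph[OF assms(1) _ AB'])
        show "wf_graph H" using H by simp
        show "\<forall>u\<in>B. \<forall>v\<in>B. u \<noteq> v \<longrightarrow> adj H u v = p" using AB(4) pq unfolding stable_def by simp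
        show "\<forall>u\<in>A. \<forall>v\<in>A. u \<noteq> v \<longrightarrow> adj H u v = q" using AB(3) pq unfolding Defs.clique_def by simp
        show "realizes C p q B A (adj H)" using U fin by simp
      qed
    qed
    then show ?thesis by simp
  qed
qed

end
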